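(* Let $n \ge 1$ and $k \in \{1, \ldots, n\}$. Let red tanks $R_1, \ldots, R_n$ each initially contain $1$ unit of water and blue tanks $B_1, \ldots, B_n$ each initially contain $0$. Run the moving window strategy: for $i = 1, \ldots, n-k+1$ (in order), for $j = i, \ldots, i+k-1$ (in order), equilibrate $R_i$ and $B_j$. Then for each $i \in \{1, \ldots, n-k+1\}$ and $j \in \{i, \ldots, i+k-1\}$, immediately after the equilibration of $R_i$ and $B_j$, both $R_i$ and $B_j$ contain at most \[ \frac{k + i - j}{k+1} \] units of water.
   Context: Equilibrating two tanks $a \neq b$ with water levels $x_a, x_b$ replaces both levels by $\frac{x_a+x_b}{2}$ and leaves all other tanks unchanged. *)

theory Defs
  imports Complex_Main
begin

datatype tank = Red nat | Blue nat

type_synonym state = "tank \<Rightarrow> real"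

definition equilibrate :: "tank \<Rightarrow> tank \<Rightarrow> state \<Rightarrow> state" where
  "equilibrate a b x = x(a := (x a + x b) / 2, b := (x a + x b) / 2)"

definition init_state :: "nat \<Rightarrow> state" where
  "init_state n = (\<lambda>t. case t of Red i \<Rightarrow> (if 1 \<le> i \<and> i \<le> n then 1 else 0) | Blue j \<Rightarrow> 0)"

definition window_steps :: "nat \<Rightarrow> nat \<Rightarrow> (nat \<times> nat) list" where
  "window_steps n k = concat (map (\<lambda>i. map (\<lambda>j. (i, j)) [i..<i + k]) [1..<n - k + 2])"

definition run_steps :: "(nat \<times> nat) list \<Rightarrow> state \<Rightarrow> state" where
  "run_steps ps x = fold (\<lambda>(i, j) s. equilibrate (Red i) (Blue j) s) ps x"

text \<open>State immediately after the m-th (0-based) step of the strategy.\<close>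
definition state_after :: "nat \<Rightarrow> nat \<Rightarrow> nat \<Rightarrow> state" where
  "state_after n k m = run_steps (take (Suc m) (window_steps n k)) (init_state n)"

end

theory Submission
  imports Defs
begin

definition stp :: "nat \<Rightarrow> nat \<Rightarrow> nat \<times> nat" where
  "stp k l = (l div k + 1, l div k + 1 + l mod k)"

definition Inv :: "nat \<Rightarrow> nat \<Rightarrow> nat \<Rightarrow> state \<Rightarrow> bool" where
  "Inv k i t x \<longleftrightarrow> (\<forall>i'. x (Red i') \<le> 1)
     \<and> x (Red i) \<le> (real k + 1 - real t) / (real k + 1)
     \<and> (\<forall>j. i + t \<le> j \<longrightarrow> x (Blue j) \<le> max 0 ((real k - 1 - (real j - real i)) / (real k + 1)))
     \<and> (\<forall>j. i \<le> j \<and> j < i + t \<longrightarrow> x (Blue j) \<le> (real k - (real j - real i)) / (real k + 1))"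

lemma gen_len:
  "length (concat (map (\<lambda>i. map (\<lambda>j. (i,j)) [i..<i+k]) [a..<a+L])) = L * k"
  by (induction L) auto

lemma gen_nth:
  assumes "m < L * k"
  shows "concat (map (\<lambda>i. map (\<lambda>j. (i,j)) [i..<i+k]) [a..<a+L]) ! m
     = (a + m div k, a + m div k + m mod k)"
  using assms
proof (induction L arbitrary: a m)
  case 0
  then show ?case by simp
next
  case (Suc L)
  have k: "k > 0" using Suc.prems by (cases k) auto
  have e: "[a..<a + Suc L] = a # [Suc a..<Suc a + L]"
    by (simp add: upt_conv_Cons)
  show ?case
  proof (cases "m < k")
    case True
    then show ?thesis unfolding e by (simp del: upt_Suc add: nth_append)
  next
    case False
    have "m - k < L * k" using Suc.prems False by simp
    from Suc.IH[OF this, of "Suc a"]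
    have h: "concat (map (\<lambda>i. map (\<lambda>j. (i,j)) [i..<i+k]) [Suc a..<Suc a+L]) ! (m - k)
       = (Suc a + (m - k) div k, Suc a + (m - k) div k + (m - k) mod k)" .
    have d: "m div k = Suc ((m - k) div k)" using False k
      by (simp add: div_if)
    have md: "m mod k = (m - k) mod k" using False k
      by (simp add: mod_if)
    show ?thesis using False h d md unfolding e by (simp del: upt_Suc add: nth_append)
  qed
qed

lemma ws_eq: "window_steps n k = concat (map (\<lambda>i. map (\<lambda>j. (i,j)) [i..<i+k]) [1..<1+(n-k+1)])"
  unfolding window_steps_def by (simp add: add.commute)

lemma take_nth: "l \<le> length xs \<Longrightarrow> take l xs = map (nth xs) [0..<l]"
  by (rule nth_equalityI) auto

lemma run_snoc: "run_steps (xs @ [(a,b)]) x = equilibrate (Red a) (Blue b) (run_steps xs x)"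
  unfolding run_steps_def by simp

lemma Inv_init: "Inv k 1 0 (init_state n)"
  unfolding Inv_def init_state_def by (auto simp: field_simps)

lemma val_bound:
  assumes "Inv k i t x" "t < k"
  shows "(x (Red i) + x (Blue (i+t))) / 2 \<le> (real k - real t) / (real k + 1)"
proof -
  have r: "x (Red i) \<le> (real k + 1 - real t) / (real k + 1)" using assms(1) unfolding Inv_def by blast
  have b0: "x (Blue (i+t)) \<le> max 0 ((real k - 1 - (real (i+t) - real i)) / (real k + 1))"
    using assms(1) unfolding Inv_def by blast
  have "max 0 ((real k - 1 - (real (i+t) - real i)) / (real k + 1)) = (real k - 1 - real t) / (real k + 1)"
    using assms(2) by auto
  with b0 have b: "x (Blue (i+t)) \<le> (real k - 1 - real t) / (real k + 1)" by simp
  have "(x (Red i) + x (Blue (i+t))) \<le> (real k + 1 - real t) / (real k + 1) + (real k - 1 - real t) / (real k + 1)"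
    using r b by linarith
  also have "\<dots> = ((real k + 1 - real t) + (real k - 1 - real t)) / (real k + 1)"
    by (rule add_divide_distrib[symmetric])
  also have "\<dots> = (2 * (real k - real t)) / (real k + 1)" by (simp add: algebra_simps)
  finally show ?thesis by (simp add: algebra_simps)
qed

lemma Inv_step1:
  assumes I: "Inv k i t x" and tk: "Suc t < k"
  shows "Inv k i (Suc t) (equilibrate (Red i) (Blue (i+t)) x)"
proof -
  let ?v = "(x (Red i) + x (Blue (i+t))) / 2"
  let ?y = "equilibrate (Red i) (Blue (i+t)) x"
  have v: "?v \<le> (real k - real t) / (real k + 1)" using val_bound I tk by simp
  have pos: "(real k - real t) / (real k + 1) \<le> 1" by (simp add: field_simps)
  have yR: "?y (Red i') = (if i' = i then ?v else x (Red i'))" for i'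
    unfolding equilibrate_def by simp
  have yB: "?y (Blue j) = (if j = i + t then ?v else x (Blue j))" for j
    unfolding equilibrate_def by simp
  have v1: "?v \<le> 1" using v pos by linarith
  have a: "\<forall>i'. ?y (Red i') \<le> 1" using I v1 unfolding Inv_def yR by (simp del: divide_le_eq_1)
  have b: "?y (Red i) \<le> (real k + 1 - real (Suc t)) / (real k + 1)"
    using v unfolding yR by simp
  have c: "\<forall>j. i + Suc t \<le> j \<longrightarrow> ?y (Blue j) \<le> max 0 ((real k - 1 - (real j - real i)) / (real k + 1))"
    using I unfolding Inv_def yB by auto
  have d: "\<forall>j. i \<le> j \<and> j < i + Suc t \<longrightarrow> ?y (Blue j) \<le> (real k - (real j - real i)) / (real k + 1)"
  proof (intro allI impI)
    fix j assume j: "i \<le> j \<and> j < i + Suc t"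
    show "?y (Blue j) \<le> (real k - (real j - real i)) / (real k + 1)"
    proof (cases "j = i + t")
      case True then show ?thesis using v unfolding yB by simp
    next
      case False then show ?thesis using I j unfolding Inv_def yB by auto
    qed
  qed
  show ?thesis unfolding Inv_def using a b c d by blast
qed

lemma Inv_step2:
  assumes I: "Inv k i t x" and tk: "Suc t = k"
  shows "Inv k (Suc i) 0 (equilibrate (Red i) (Blue (i+t)) x)"
proof -
  let ?v = "(x (Red i) + x (Blue (i+t))) / 2"
  let ?y = "equilibrate (Red i) (Blue (i+t)) x"
  have v: "?v \<le> (real k - real t) / (real k + 1)" using val_bound I tk by simp
  have pos: "(real k - real t) / (real k + 1) \<le> 1" by (simp add: field_simps)
  have yR: "?y (Red i') = (if i' = i then ?v else x (Red i'))" for i'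
    unfolding equilibrate_def by simp
  have yB: "?y (Blue j) = (if j = i + t then ?v else x (Blue j))" for j
    unfolding equilibrate_def by simp
  have v1: "?v \<le> 1" using v pos by linarith
  have a: "\<forall>i'. ?y (Red i') \<le> 1" using I v1 unfolding Inv_def yR by (simp del: divide_le_eq_1)
  have b: "?y (Red (Suc i)) \<le> (real k + 1 - real (0::nat)) / (real k + 1)"
    using a by (simp del: divide_le_eq_1)
  have c: "\<forall>j. Suc i + 0 \<le> j \<longrightarrow> ?y (Blue j) \<le> max 0 ((real k - 1 - (real j - real (Suc i))) / (real k + 1))"
  proof (intro allI impI)
    fix j assume j: "Suc i + 0 \<le> j"
    show "?y (Blue j) \<le> max 0 ((real k - 1 - (real j - real (Suc i))) / (real k + 1))"
    proof (cases "j = i + t")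
      case True
      have "?y (Blue j) \<le> (real k - real t) / (real k + 1)" using v True unfolding yB by simp
      also have "\<dots> = (real k - 1 - (real j - real (Suc i))) / (real k + 1)"
        using True by simp
      finally show ?thesis by linarith
    next
      case False
      show ?thesis
      proof (cases "j < i + t")
        case True
        then have "x (Blue j) \<le> (real k - (real j - real i)) / (real k + 1)"
          using I j unfolding Inv_def by auto
        also have "\<dots> = (real k - 1 - (real j - real (Suc i))) / (real k + 1)" by simp
        finally show ?thesis using False unfolding yB by simp
      next
        case nt: False
        then have "x (Blue j) \<le> max 0 ((real k - 1 - (real j - real i)) / (real k + 1))"
          using I unfolding Inv_def by auto
        also have "\<dots> = 0" using nt tk by (auto simp: field_simps)
        finally show ?thesis using False unfolding yB by simp
      qed
    qed
  qed
  show ?thesis unfolding Inv_def using a b c by auto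
qed


definition SS :: "nat \<Rightarrow> nat \<Rightarrow> nat \<Rightarrow> state" where
  "SS n k m = run_steps (map (stp k) [0..<m]) (init_state n)"

lemma SS_Suc: "SS n k (Suc m) = equilibrate (Red (m div k + 1)) (Blue (m div k + 1 + m mod k)) (SS n k m)"
  unfolding SS_def stp_def by (simp add: run_snoc)

lemma SS_Inv: assumes "k \<ge> 1" shows "Inv k (m div k + 1) (m mod k) (SS n k m)"
proof (induction m)
  case 0
  then show ?case using Inv_init by (simp add: SS_def run_steps_def)
next
  case (Suc m)
  have tk: "m mod k < k" using assms by simp
  show ?case
  proof (cases "Suc (m mod k) = k")
    case True
    have "Inv k (Suc (m div k + 1)) 0 (SS n k (Suc m))"
      unfolding SS_Suc using Inv_step2[OF Suc.IH True] by simp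
    then show ?thesis using True by (simp add: mod_Suc div_Suc)
  next
    case False
    then have "Suc (m mod k) < k" using tk by simp
    from Inv_step1[OF Suc.IH this]
    have "Inv k (m div k + 1) (Suc (m mod k)) (SS n k (Suc m))"
      unfolding SS_Suc by simp
    then show ?thesis using False by (simp add: mod_Suc div_Suc)
  qed
qed

theorem mainTheorem5:
  fixes n k m i j :: nat
  assumes "1 \<le> n" and "1 \<le> k" and "k \<le> n"
    and "m < length (window_steps n k)"
    and "window_steps n k ! m = (i, j)"
  shows "state_after n k m (Red i) \<le> (real k + real i - real j) / (real k + 1)
     \<and> state_after n k m (Blue j) \<le> (real k + real i - real j) / (real k + 1)"
proof -
  have len: "length (window_steps n k) = (n - k + 1) * k"
    unfolding ws_eq by (rule gen_len)
  have nth: "window_steps n k ! l = stp k l" if "l < length (window_steps n k)" for l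
    using that unfolding len unfolding ws_eq stp_def
    by (subst gen_nth) auto
  have ij: "i = m div k + 1" "j = m div k + 1 + m mod k"
    using nth[OF assms(4)] assms(5) unfolding stp_def by auto
  have "take (Suc m) (window_steps n k) = map (nth (window_steps n k)) [0..<Suc m]"
    using assms(4) by (intro take_nth) simp
  also have "\<dots> = map (stp k) [0..<Suc m]"
    using assms(4) nth by (intro map_cong) auto
  finally have "state_after n k m = SS n k (Suc m)"
    unfolding state_after_def SS_def by simp
  also have "\<dots> = equilibrate (Red i) (Blue (i + m mod k)) (SS n k m)"
    unfolding SS_Suc ij by simp
  finally have st: "state_after n k m = equilibrate (Red i) (Blue (i + m mod k)) (SS n k m)" .
  have I: "Inv k i (m mod k) (SS n k m)" using SS_Inv[OF assms(2)] ij by simp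
  have tk: "m mod k < k" using assms(2) by simp
  have v: "(SS n k m (Red i) + SS n k m (Blue (i + m mod k))) / 2 \<le> (real k - real (m mod k)) / (real k + 1)"
    by (rule val_bound[OF I tk])
  have eq: "real k + real i - real j = real k - real (m mod k)" using ij by simp
  show ?thesis unfolding st eq using v ij by (simp add: equilibrate_def)
qed

end
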